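(* For all integers $n, k \geq 1$ with $n \geq k$, $$\sum_{i=k}^{n} \frac{S(n-1,i-1)\, s(i,k)}{i} = \frac{1}{n}\binom{n}{k} B_{n-k}.$$
   Context: For $n \geq 0$, $X^{\underline{n}} := X(X-1)\cdots(X-n+1)$ ($X^{\underline{0}}=1$). The (signed) Stirling numbers of the first kind $s(n,k)$ are defined by $X^{\underline{n}} = \sum_{k=0}^{n} s(n,k) X^k$, and the Stirling numbers of the second kind $S(n,k)$ by $X^n = \sum_{k=0}^{n} S(n,k) X^{\underline{k}}$ (for all $n\ge 0$), with $s(n,k)=S(n,k)=0$ when $n<k$. The Bernoulli numbers $B_n$ are defined by $\frac{t}{e^t-1} = \sum_{n\ge 0} B_n \frac{t^n}{n!}$. *)

theory Defs
  imports "HOL-Combinatorics.Stirling" "HOL-Computational_Algebra.Formal_Power_Series"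
begin

text \<open>Signed Stirling numbers of the first kind s(n,k), via the library's unsigned ones:
  X falling n = sum_k s(n,k) X^k.\<close>
definition stirling1s :: "nat \<Rightarrow> nat \<Rightarrow> int" where
  "stirling1s n k = (-1) ^ (n - k) * int (stirling n k)"

abbreviation stirling2 :: "nat \<Rightarrow> nat \<Rightarrow> nat" where
  "stirling2 n k \<equiv> Stirling n k"

definition bernoulli_num :: "nat \<Rightarrow> rat" where
  "bernoulli_num n = fact n * fps_nth (fps_X / (fps_exp 1 - 1)) n"

end

theory Submission
  imports Defs Complex_Main
begin


definition ff :: "'a::comm_ring_1 \<Rightarrow> nat \<Rightarrow> 'a" where
  "ff x i = prod (\<lambda>l. x - of_nat l) {0..<i}"

lemma ff_Suc: "ff x (Suc i) = ff x i * (x - of_nat i)"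
  by (simp add: ff_def)

lemma ff_Suc_shift: "ff (x + 1) (Suc i) = (x + 1) * ff x i"
  unfolding ff_def by (subst prod.atLeast0_lessThan_Suc_shift) (simp add: algebra_simps)

lemma ff_diff: "ff (x + 1) (Suc i) - ff x (Suc i) = of_nat (Suc i) * ff x i"
proof -
  have "ff (x + 1) (Suc i) - ff x (Suc i) = (x + 1) * ff x i - ff x i * (x - of_nat i)"
    by (simp only: ff_Suc_shift) (simp only: ff_Suc)
  also have "\<dots> = of_nat (Suc i) * ff x i" by (simp add: algebra_simps)
  finally show ?thesis .
qed

lemma ff_pochhammer: "ff x i = (-1) ^ i * pochhammer (-x) i"
proof -
  have "pochhammer (-x) i = prod (\<lambda>l. (-1) * (x - of_nat l)) {0..<i}"
    by (simp add: pochhammer_prod)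
  also have "\<dots> = (-1) ^ i * ff x i" by (simp only: prod.distrib ff_def prod_constant) simp
  finally show ?thesis by simp
qed

lemma ff_stirling1:
  assumes "i \<le> N"
  shows "ff x i = (\<Sum>k\<le>N. of_int (stirling1s i k) * x ^ k)"
proof -
  have "ff x i = (-1) ^ i * (\<Sum>k\<le>i. of_nat (stirling i k) * (-x) ^ k)"
    by (simp add: ff_pochhammer stirling_pochhammer)
  also have "\<dots> = (\<Sum>k\<le>i. of_int (stirling1s i k) * x ^ k)"
    unfolding sum_distrib_left
  proof (rule sum.cong[OF refl])
    fix k assume "k \<in> {..i}"
    then have "i = (i - k) + k" by simp
    then have "(-1::'a) ^ i = (-1) ^ (i - k) * (-1) ^ k" by (metis power_add)
    then have "(-1) ^ i * (of_nat (stirling i k) * (- x) ^ k)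
       = (-1) ^ (i - k) * ((-1) ^ k * (-1) ^ k) * (of_nat (stirling i k) * x ^ k)"
      by (simp only: power_minus[of x] mult_ac)
    also have "(-1::'a) ^ k * (-1) ^ k = 1"
      by (simp flip: power_mult_distrib)
    finally show "(-1) ^ i * (of_nat (stirling i k) * (- x) ^ k) = of_int (stirling1s i k) * x ^ k"
      by (simp add: stirling1s_def)
  qed
  also have "\<dots> = (\<Sum>k\<le>N. of_int (stirling1s i k) * x ^ k)"
    using assms by (intro sum.mono_neutral_left) (auto simp: stirling1s_def)
  finally show ?thesis .
qed

lemma pow_Stirling: "x ^ m = (\<Sum>i\<le>m. of_nat (Stirling m i) * ff x i)"
proof (induction m)
  case 0 then show ?case by (simp add: ff_def)
next
  case (Suc m)
  have "(\<Sum>i\<le>Suc m. of_nat (Stirling (Suc m) i) * ff x i)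
      = (\<Sum>i\<le>m. of_nat (Stirling (Suc m) (Suc i)) * ff x (Suc i))"
    by (subst sum.atMost_Suc_shift) simp
  also have "\<dots> = (\<Sum>i\<le>m. of_nat (Suc i) * of_nat (Stirling m (Suc i)) * ff x (Suc i))
       + (\<Sum>i\<le>m. of_nat (Stirling m i) * ff x (Suc i))"
    by (simp add: sum.distrib algebra_simps)
  also have "(\<Sum>i\<le>m. of_nat (Suc i) * of_nat (Stirling m (Suc i)) * ff x (Suc i))
      = (\<Sum>i\<le>m. of_nat i * of_nat (Stirling m i) * ff x i)"
  proof -
    have "(\<Sum>i\<le>Suc m. of_nat i * of_nat (Stirling m i) * ff x i)
        = (\<Sum>i\<le>m. of_nat (Suc i) * of_nat (Stirling m (Suc i)) * ff x (Suc i))"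
      by (subst sum.atMost_Suc_shift) simp
    moreover have "(\<Sum>i\<le>Suc m. of_nat i * of_nat (Stirling m i) * ff x i)
        = (\<Sum>i\<le>m. of_nat i * of_nat (Stirling m i) * ff x i)"
      by simp
    ultimately show ?thesis by simp
  qed
  also have "(\<Sum>i\<le>m. of_nat i * of_nat (Stirling m i) * ff x i) + (\<Sum>i\<le>m. of_nat (Stirling m i) * ff x (Suc i))
      = (\<Sum>i\<le>m. of_nat (Stirling m i) * (ff x (Suc i) + of_nat i * ff x i))"
    by (simp add: sum.distrib algebra_simps)
  also have "\<dots> = (\<Sum>i\<le>m. of_nat (Stirling m i) * ff x i) * x"
    unfolding sum_distrib_right by (rule sum.cong) (simp_all add: ff_Suc algebra_simps)
  also have "\<dots> = x ^ m * x" by (simp only: Suc.IH[symmetric])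
  finally have eq: "(\<Sum>i\<le>Suc m. of_nat (Stirling (Suc m) i) * ff x i) = x ^ m * x" .
  show ?case by (simp only: eq power_Suc2)
qed



lemma bern_rec:
  assumes "N \<ge> 1"
  shows "(\<Sum>m<N. of_nat (N choose m) * bernoulli_num m) = (if N = 1 then 1 else 0)"
proof -
  define E where "E = fps_exp (1::rat) - 1"
  define Q where "Q = fps_X / E"
  have E1: "fps_nth E 1 = 1" by (simp add: E_def)
  have Enth: "fps_nth E j = (if j = 0 then 0 else 1 / fact j)" for j by (simp add: E_def)
  have "E \<noteq> 0" using E1 by auto
  moreover have "subdegree E \<le> 1" using E1 by (intro subdegree_leI) simp
  ultimately have "E dvd fps_X" by (simp add: fps_dvd_iff)
  then have QE: "Q * E = fps_X" by (simp add: Q_def)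
  have "fps_nth (Q * E) N = (\<Sum>m=0..N. fps_nth Q m * fps_nth E (N - m))" by (rule fps_mult_nth)
  also have "\<dots> = (\<Sum>m<N. fps_nth Q m / fact (N - m))"
  proof -
    have "(\<Sum>m=0..N. fps_nth Q m * fps_nth E (N - m)) = (\<Sum>m<Suc N. fps_nth Q m * fps_nth E (N - m))"
      by (simp add: atLeast0AtMost lessThan_Suc_atMost)
    also have "\<dots> = (\<Sum>m<N. fps_nth Q m * fps_nth E (N - m))" by (simp add: Enth)
    also have "\<dots> = (\<Sum>m<N. fps_nth Q m / fact (N - m))"
      by (rule sum.cong) (auto simp: Enth)
    finally show ?thesis .
  qed
  finally have eq: "(\<Sum>m<N. fps_nth Q m / fact (N - m)) = (if N = 1 then 1 else 0)"
    using QE by simp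
  have "(\<Sum>m<N. of_nat (N choose m) * bernoulli_num m) = fact N * (\<Sum>m<N. fps_nth Q m / fact (N - m))"
    unfolding sum_distrib_left
  proof (rule sum.cong[OF refl])
    fix m assume "m \<in> {..<N}"
    then have "m \<le> N" by simp
    then show "of_nat (N choose m) * bernoulli_num m = fact N * (fps_nth Q m / fact (N - m))"
      by (simp add: binomial_fact bernoulli_num_def Q_def E_def)
  qed
  also have "\<dots> = (if N = 1 then 1 else 0)" using eq by simp
  finally show ?thesis .
qed



lemma tri_unique:
  fixes a b :: "nat \<Rightarrow> rat"
  assumes eq: "\<And>j. j < n \<Longrightarrow> (\<Sum>k\<in>{Suc j..n}. a k * of_nat (k choose j))
                               = (\<Sum>k\<in>{Suc j..n}. b k * of_nat (k choose j))"
  assumes "1 \<le> k" "k \<le> n"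
  shows "a k = b k"
  using assms
proof (induction "n - k" arbitrary: k rule: less_induct)
  case less
  have IH: "a k' = b k'" if "k' \<in> {Suc k..n}" for k'
    using less that by auto
  have j: "Suc (k - 1) = k" "k - 1 < n" using less by auto
  have "(\<Sum>k'\<in>{k..n}. a k' * of_nat (k' choose (k - 1)))
      = (\<Sum>k'\<in>{k..n}. b k' * of_nat (k' choose (k - 1)))"
    using eq[of "k - 1"] j by simp
  then have "a k * of_nat (k choose (k - 1)) + (\<Sum>k'\<in>{Suc k..n}. a k' * of_nat (k' choose (k - 1)))
      = b k * of_nat (k choose (k - 1)) + (\<Sum>k'\<in>{Suc k..n}. b k' * of_nat (k' choose (k - 1)))"
    using less by (simp add: sum.atLeast_Suc_atMost)
  moreover have "(\<Sum>k'\<in>{Suc k..n}. a k' * of_nat (k' choose (k - 1)))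
      = (\<Sum>k'\<in>{Suc k..n}. b k' * of_nat (k' choose (k - 1)))"
    using IH by (intro sum.cong) auto
  ultimately have "a k * of_nat (k choose (k - 1)) = b k * of_nat (k choose (k - 1))" by simp
  moreover have "(k choose (k - 1)) \<noteq> 0" using less by simp
  ultimately show ?case by simp
qed

lemma b_eqs:
  assumes "n \<ge> 1" "j < n"
  shows "(\<Sum>k\<in>{Suc j..n}. (1 / of_nat n * of_nat (n choose k) * bernoulli_num (n - k)) * of_nat (k choose j))
         = (if j = n - 1 then 1 else (0::rat))"
proof -
  have "(\<Sum>k\<in>{Suc j..n}. (1 / of_nat n * of_nat (n choose k) * bernoulli_num (n - k)) * of_nat (k choose j))
      = (\<Sum>k\<in>{Suc j..n}. 1 / of_nat n * of_nat (n choose j) * (of_nat ((n - j) choose (k - j)) * bernoulli_num (n - k)))"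
  proof (rule sum.cong[OF refl])
    fix k assume "k \<in> {Suc j..n}"
    then have "(n choose k) * (k choose j) = (n choose j) * ((n - j) choose (k - j))"
      by (intro choose_mult) auto
    then have "(of_nat (n choose k) :: rat) * of_nat (k choose j) = of_nat (n choose j) * of_nat ((n - j) choose (k - j))"
      by (metis of_nat_mult)
    then show "(1 / of_nat n * of_nat (n choose k) * bernoulli_num (n - k)) * of_nat (k choose j)
      = 1 / of_nat n * of_nat (n choose j) * (of_nat ((n - j) choose (k - j)) * bernoulli_num (n - k))"
      by (simp add: algebra_simps)
  qed
  also have "\<dots> = 1 / of_nat n * of_nat (n choose j) * (\<Sum>k\<in>{Suc j..n}. of_nat ((n - j) choose (k - j)) * bernoulli_num (n - k))"
    by (simp add: sum_distrib_left)
  also have "(\<Sum>k\<in>{Suc j..n}. of_nat ((n - j) choose (k - j)) * bernoulli_num (n - k))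
      = (\<Sum>m<n - j. of_nat ((n - j) choose m) * bernoulli_num m)"
  proof (rule sum.reindex_bij_witness[of _ "\<lambda>m. n - m" "\<lambda>k. n - k"])
    fix k assume k: "k \<in> {Suc j..n}"
    then have "(n - j) - (n - k) = k - j" "n - k \<le> n - j" by auto
    then show "of_nat ((n - j) choose (n - k)) * bernoulli_num (n - k)
        = of_nat ((n - j) choose (k - j)) * bernoulli_num (n - k)"
      by (metis binomial_symmetric)
  qed auto
  also have "\<dots> = (if n - j = 1 then 1 else 0)" using assms by (intro bern_rec) simp
  finally show ?thesis using assms binomial_symmetric[of 1 n] by auto
qed



definition Aq :: "nat \<Rightarrow> nat \<Rightarrow> rat" where
  "Aq n k = (\<Sum>i=1..n. of_nat (Stirling (n - 1) (i - 1)) * of_int (stirling1s i k) / of_nat i)"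

definition Fr :: "nat \<Rightarrow> real \<Rightarrow> real" where
  "Fr n x = (\<Sum>i=1..n. of_nat (Stirling (n - 1) (i - 1)) / of_nat i * ff x i)"

lemma Fr_coeffs: "Fr n x = (\<Sum>k\<le>n. of_rat (Aq n k) * x ^ k)"
proof -
  have "Fr n x = (\<Sum>i=1..n. of_nat (Stirling (n - 1) (i - 1)) / of_nat i
                    * (\<Sum>k\<le>n. of_int (stirling1s i k) * x ^ k))"
    unfolding Fr_def by (rule sum.cong[OF refl]) (simp add: ff_stirling1)
  also have "\<dots> = (\<Sum>i=1..n. \<Sum>k\<le>n. of_nat (Stirling (n - 1) (i - 1)) * of_int (stirling1s i k) / of_nat i * x ^ k)"
    unfolding sum_distrib_left by (intro sum.cong refl) (simp add: field_simps)
  also have "\<dots> = (\<Sum>k\<le>n. \<Sum>i=1..n. of_nat (Stirling (n - 1) (i - 1)) * of_int (stirling1s i k) / of_nat i * x ^ k)"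
    by (rule sum.swap)
  also have "\<dots> = (\<Sum>k\<le>n. of_rat (Aq n k) * x ^ k)"
    by (simp add: Aq_def of_rat_sum of_rat_mult of_rat_divide sum_distrib_right)
  finally show ?thesis .
qed

lemma Fr_diff:
  assumes "n \<ge> 1"
  shows "Fr n (x + 1) - Fr n x = x ^ (n - 1)"
proof -
  obtain m where m: "n = Suc m" using assms by (cases n) auto
  have "Fr n (x + 1) - Fr n x = (\<Sum>i=1..n. of_nat (Stirling (n - 1) (i - 1)) / of_nat i * (ff (x + 1) i - ff x i))"
    by (simp add: Fr_def sum_subtractf right_diff_distrib)
  also have "\<dots> = (\<Sum>i=Suc 0..Suc m. of_nat (Stirling m (i - 1)) / of_nat i * (ff (x + 1) i - ff x i))"
    by (simp add: m)
  also have "\<dots> = (\<Sum>i=0..m. of_nat (Stirling m i) / of_nat (Suc i) * (ff (x + 1) (Suc i) - ff x (Suc i)))"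
    by (subst sum.shift_bounds_cl_Suc_ivl) simp
  also have "\<dots> = (\<Sum>i\<le>m. of_nat (Stirling m i) * ff x i)"
    unfolding atLeast0AtMost
  proof (rule sum.cong[OF refl])
    fix i
    have "(of_nat (Suc i) :: real) \<noteq> 0" by simp
    then show "of_nat (Stirling m i) / of_nat (Suc i) * (ff (x + 1) (Suc i) - ff x (Suc i))
        = of_nat (Stirling m i) * ff x i"
      by (simp only: ff_diff) (simp add: field_simps)
  qed
  also have "\<dots> = x ^ m" by (simp add: pow_Stirling)
  finally show ?thesis by (simp add: m)
qed

lemma binom_diff:
  fixes x :: real
  assumes "k \<le> n"
  shows "(x + 1) ^ k - x ^ k = (\<Sum>j\<le>n. (of_nat (k choose j) - (if j = k then 1 else 0)) * x ^ j)"
proof -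
  have "(x + 1) ^ k = (\<Sum>j\<le>k. of_nat (k choose j) * x ^ j)"
    by (simp add: binomial_ring)
  also have "\<dots> = (\<Sum>j\<le>n. of_nat (k choose j) * x ^ j)"
    using assms by (intro sum.mono_neutral_left) auto
  finally have 1: "(x + 1) ^ k = (\<Sum>j\<le>n. of_nat (k choose j) * x ^ j)" .
  have "(\<Sum>j\<le>n. (if j = k then 1 else 0) * x ^ j) = (\<Sum>j\<le>n. if j = k then x ^ k else 0)"
    by (rule sum.cong) auto
  then have 2: "x ^ k = (\<Sum>j\<le>n. (if j = k then 1 else 0) * x ^ j)"
    using assms by (simp add: sum.delta)
  show ?thesis unfolding 1 2 by (simp add: sum_subtractf left_diff_distrib)
qed

lemma ofr: "(of_rat (if P then 1 else 0) :: real) = (if P then 1 else 0)"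
  by simp

lemma a_eqs:
  assumes "n \<ge> 1" "j < n"
  shows "(\<Sum>k\<in>{Suc j..n}. Aq n k * of_nat (k choose j)) = (if j = n - 1 then 1 else 0)"
proof -
  define D where "D j = (\<Sum>k\<le>n. Aq n k * (of_nat (k choose j) - (if j = k then 1 else 0)))" for j
  have "\<forall>x::real. (\<Sum>j\<le>n. of_rat (D j) * x ^ j) = (\<Sum>j\<le>n. (if j = n - 1 then 1 else 0) * x ^ j)"
  proof
    fix x :: real
    have "(\<Sum>j\<le>n. of_rat (D j) * x ^ j)
        = (\<Sum>j\<le>n. \<Sum>k\<le>n. of_rat (Aq n k) * ((of_nat (k choose j) - (if j = k then 1 else 0)) * x ^ j))"
      by (simp add: D_def of_rat_sum of_rat_mult of_rat_diff sum_distrib_right mult.assoc ofr)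
    also have "\<dots> = (\<Sum>k\<le>n. \<Sum>j\<le>n. of_rat (Aq n k) * ((of_nat (k choose j) - (if j = k then 1 else 0)) * x ^ j))"
      by (rule sum.swap)
    also have "\<dots> = (\<Sum>k\<le>n. of_rat (Aq n k) * ((x + 1) ^ k - x ^ k))"
      by (rule sum.cong[OF refl]) (simp add: binom_diff sum_distrib_left)
    also have "\<dots> = Fr n (x + 1) - Fr n x"
      by (simp add: Fr_coeffs sum_subtractf right_diff_distrib)
    also have "\<dots> = x ^ (n - 1)" using assms(1) by (rule Fr_diff)
    also have "\<dots> = (\<Sum>j\<le>n. if j = n - 1 then x ^ (n - 1) else 0)"
      by (simp add: sum.delta)
    also have "\<dots> = (\<Sum>j\<le>n. (if j = n - 1 then 1 else 0) * x ^ j)"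
      by (rule sum.cong) auto
    finally show "(\<Sum>j\<le>n. of_rat (D j) * x ^ j) = (\<Sum>j\<le>n. (if j = n - 1 then 1 else 0) * x ^ j)" .
  qed
  then have "\<forall>i\<le>n. (of_rat (D i) :: real) = (if i = n - 1 then 1 else 0)"
    by (subst (asm) polyfun_eq_coeffs) 
  then have "(of_rat (D j) :: real) = of_rat (if j = n - 1 then 1 else 0)"
    using assms by auto
  then have Dj: "D j = (if j = n - 1 then 1 else 0)" by (simp only: of_rat_eq_iff)
  have "D j = (\<Sum>k\<in>{Suc j..n}. Aq n k * (of_nat (k choose j) - (if j = k then 1 else 0)))"
    unfolding D_def by (rule sum.mono_neutral_right) auto
  also have "\<dots> = (\<Sum>k\<in>{Suc j..n}. Aq n k * of_nat (k choose j))"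
    by (rule sum.cong) auto
  finally show ?thesis using Dj by simp
qed

theorem corollary2:
  fixes n k :: nat
  assumes "k \<ge> 1" and "n \<ge> k"
  shows "(\<Sum>i=k..n. of_nat (stirling2 (n - 1) (i - 1)) * of_int (stirling1s i k) / of_nat i)
           = (1 / of_nat n) * of_nat (n choose k) * bernoulli_num (n - k)"
proof -
  have "(\<Sum>i=k..n. of_nat (stirling2 (n - 1) (i - 1)) * of_int (stirling1s i k) / of_nat i) = Aq n k"
    unfolding Aq_def using assms
    by (intro sum.mono_neutral_left) (auto simp: stirling1s_def)
  also have "\<dots> = (1 / of_nat n) * of_nat (n choose k) * bernoulli_num (n - k)"
  proof (rule tri_unique[where b = "\<lambda>k. (1 / of_nat n) * of_nat (n choose k) * bernoulli_num (n - k)"])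
    fix j assume "j < n"
    have 1: "(\<Sum>k\<in>{Suc j..n}. Aq n k * of_nat (k choose j)) = (if j = n - 1 then 1 else 0)"
      using assms \<open>j < n\<close> by (intro a_eqs) auto
    have 2: "(\<Sum>k\<in>{Suc j..n}. (1 / of_nat n * of_nat (n choose k) * bernoulli_num (n - k)) * of_nat (k choose j))
       = (if j = n - 1 then 1 else 0)"
      using assms \<open>j < n\<close> by (intro b_eqs) auto
    show "(\<Sum>k\<in>{Suc j..n}. Aq n k * of_nat (k choose j))
      = (\<Sum>k\<in>{Suc j..n}. (1 / of_nat n * of_nat (n choose k) * bernoulli_num (n - k)) * of_nat (k choose j))"
      by (simp only: 1 2)
  qed (use assms in auto)
  finally show ?thesis .
qed


end
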